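(* The map $\mathrm{End}(\mathbb{F}_p((t))^d)\to M_{d,\mathbb{Z}}(\mathbb{F}_p)$, $A\mapsto (A_{i,j})_{i,j\in\mathbb{Z}}$, is surjective and hence an isomorphism of rings.
   Context: $\mathrm{End}(\mathbb{F}_p((t))^d)$ is the ring of continuous group endomorphisms of $(\mathbb{F}_p((t))^d,+)$. For $n\in\mathbb{Z}$ let $\mathbb{V}_n=\{(a_1t^n,\dots,a_dt^n): a_r\in\mathbb{F}_p\}\cong\mathbb{F}_p^d$ and $\pi_n$ the projection onto $\mathbb{V}_n$ taking $t^n$-coefficients; the block matrix of $A$ is $A_{i,j}=\pi_i\circ A|_{\mathbb{V}_j}$, a $d\times d$ matrix over $\mathbb{F}_p$. $M_{d,\mathbb{Z}}(\mathbb{F}_p)$ is the ring of infinite block matrices $(A_{i,j})_{i,j\in\mathbb{Z}}$ with $d\times d$ blocks over $\mathbb{F}_p$ satisfying: (M1) for each $i$ there is $J_i$ with $A_{i,j}=0$ for $j>J_i$; (M2) for each $j$ there is $I_j$ with $A_{i,j}=0$ for $i<I_j$; (M3) there are $I,J$ with $A_{i,j}=0$ whenever $i<I$ and $j>J$; it is known that the block matrix of every continuous endomorphism lies in $M_{d,\mathbb{Z}}(\mathbb{F}_p)$ and that this map is a ring homomorphism. *)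

theory Defs
  imports "HOL-Analysis.Analysis" "HOL-Computational_Algebra.Formal_Laurent_Series"
begin

text \<open>The ground field F_p is modelled by a finite field type 'k of prime cardinality p.
  The space F_p((t))^d is the type ('k fls)^'n, where 'n is a finite index type with
  CARD('n) = d. Laurent series carry the library's t-adic metric (fls is a metric space),
  and ^'n carries the product (finite-dimensional) metric, i.e. the product topology.\<close>

definition cont_End :: "(('k::{field,finite} fls)^'n::finite \<Rightarrow> ('k fls)^'n) set" where
  "cont_End = {A. (\<forall>x y. A (x + y) = A x + A y) \<and> continuous_on UNIV A}"

definition monom_fls :: "'k::field \<Rightarrow> int \<Rightarrow> 'k fls" where
  "monom_fls a j = fls_shift (-j) (fls_const a)"

text \<open>Block (i,j) of A: the d x d matrix of pi_i o A restricted to V_j; its (r,s) entry is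
  the t^i-coefficient of the r-th component of A applied to e_s t^j.\<close>
definition block :: "(('k::{field,finite} fls)^'n::finite \<Rightarrow> ('k fls)^'n) \<Rightarrow> int \<Rightarrow> int \<Rightarrow> 'k^'n^'n" where
  "block A i j = (\<chi> r s. fls_nth ((A (\<chi> r'. if r' = s then monom_fls 1 j else 0)) $ r) i)"

text \<open>The ring M_{d,Z}(F_p) of infinite block matrices with conditions (M1)-(M3).\<close>
definition Mdz :: "(int \<Rightarrow> int \<Rightarrow> 'k::field^'n::finite^'n) set" where
  "Mdz = {X. (\<forall>i. \<exists>J. \<forall>j>J. X i j = 0)
           \<and> (\<forall>j. \<exists>I. \<forall>i<I. X i j = 0)
           \<and> (\<exists>I J. \<forall>i j. i < I \<and> j > J \<longrightarrow> X i j = 0)}"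

text \<open>Multiplication in M_{d,Z}(F_p); the sum is finite for elements of Mdz by (M1),(M2).\<close>
definition block_mult :: "(int \<Rightarrow> int \<Rightarrow> 'k::field^'n::finite^'n) \<Rightarrow> (int \<Rightarrow> int \<Rightarrow> 'k^'n^'n) \<Rightarrow> int \<Rightarrow> int \<Rightarrow> 'k^'n^'n" where
  "block_mult X Y i j = (\<Sum>k \<in> {k. X i k \<noteq> 0 \<and> Y k j \<noteq> 0}. X i k ** Y k j)"

definition block_one :: "int \<Rightarrow> int \<Rightarrow> 'k::field^'n::finite^'n" where
  "block_one i j = (if i = j then mat 1 else 0)"

end

theory Submission
  imports Defs "HOL-Number_Theory.Residues"
begin

lemma all_of_nat:
  assumes "prime p" and "CARD('k::{field,finite}) = p"
  shows "\<exists>n. (c::'k) = of_nat n"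
proof -
  have d: "CHAR('k) dvd p" using CHAR_dvd_CARD[where 'a='k] assms by simp
  have "CHAR('k) \<noteq> 1" by simp
  hence C: "CHAR('k) = p" using d assms(1) by (meson prime_nat_iff)
  have "inj_on (of_nat :: nat \<Rightarrow> 'k) {..<p}"
  proof (rule inj_onI)
    fix a b assume "a \<in> {..<p}" "b \<in> {..<p}" "(of_nat a::'k) = of_nat b"
    then show "a = b" using of_nat_eq_iff_cong_CHAR[of a b] C
      by (auto simp: cong_def)
  qed
  hence "card ((of_nat :: nat \<Rightarrow> 'k) ` {..<p}) = p" by (simp add: card_image)
  hence "(of_nat :: nat \<Rightarrow> 'k) ` {..<p} = UNIV"
    using assms(2) by (metis card_subset_eq finite_class.finite_UNIV subset_UNIV)
  thus ?thesis by (metis UNIV_I imageE)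
qed

lemma dist_fls_eq:
  fixes f :: "'a::group_add fls"
  assumes "f \<noteq> 0"
  shows "dist f 0 = 2 powr (- real_of_int (fls_subdegree f))"
proof (cases "fls_subdegree f \<ge> 0")
  case True
  have "dist f 0 = inverse (2 ^ nat (fls_subdegree f))" using assms True by (simp add: dist_fls_def)
  also have "\<dots> = 2 powr (- real_of_int (fls_subdegree f))"
    using True by (simp add: powr_minus powr_realpow[symmetric])
  finally show ?thesis .
next
  case False
  have "dist f 0 = 2 ^ nat (- fls_subdegree f)" using assms False by (simp add: dist_fls_def)
  also have "\<dots> = 2 powr (- real_of_int (fls_subdegree f))"
    using False by (simp add: powr_realpow[symmetric])
  finally show ?thesis .
qed

lemma dist_fls_small:
  fixes f :: "'a::group_add fls"
  shows "dist f 0 < 2 powr (- real_of_int (N - 1)) \<longleftrightarrow> (\<forall>i<N. fls_nth f i = 0)"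
proof (cases "f = 0")
  case True thus ?thesis by simp
next
  case False
  let ?d = "fls_subdegree f"
  have eq: "dist f 0 = 2 powr (- real_of_int ?d)" using False by (rule dist_fls_eq)
  have "(\<forall>i<N. fls_nth f i = 0) \<longleftrightarrow> N \<le> ?d"
  proof
    assume "\<forall>i<N. fls_nth f i = 0"
    thus "N \<le> ?d" using False nth_fls_subdegree_nonzero[of f] by (meson not_le)
  qed auto
  moreover have "2 powr (- real_of_int ?d) < 2 powr (- real_of_int (N - 1)) \<longleftrightarrow> N \<le> ?d"
  proof -
    have "2 powr (- real_of_int ?d) < 2 powr (- real_of_int (N - 1)) \<longleftrightarrow> - real_of_int ?d < - real_of_int (N - 1)"
      by simp
    also have "\<dots> \<longleftrightarrow> N - 1 < ?d" by linarith
    also have "\<dots> \<longleftrightarrow> N \<le> ?d" by linarith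
    finally show ?thesis .
  qed
  ultimately show ?thesis using eq by simp
qed

lemma dist_fls_sub: "dist (f::'a::group_add fls) g = dist (f - g) 0"
  by (simp add: dist_fls_def)

lemma dist_vec_sub: "dist (x::('a::group_add fls)^'n) y = dist (x - y) 0"
  unfolding dist_vec_def by (simp add: dist_fls_sub[of "x$i" "y$i" for i])

definition small :: "int \<Rightarrow> ('k::zero fls)^'n \<Rightarrow> bool" where
  "small N x \<longleftrightarrow> (\<forall>r i. i < N \<longrightarrow> fls_nth (x$r) i = 0)"

lemma small_of_dist:
  fixes x :: "('a::group_add fls)^'n::finite"
  assumes "dist x 0 < 2 powr (- real_of_int (N - 1))"
  shows "small N x"
  unfolding small_def
proof (intro allI impI)
  fix r i assume "i < N"
  have "dist (x$r) 0 \<le> dist x 0" using dist_vec_nth_le[of x r 0] by simp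
  hence "dist (x$r) 0 < 2 powr (- real_of_int (N - 1))" using assms by linarith
  thus "fls_nth (x$r) i = 0" using dist_fls_small \<open>i<N\<close> by blast
qed

lemma dist_of_small:
  fixes x :: "('a::group_add fls)^'n::finite"
  assumes "small N x"
  shows "dist x 0 \<le> real CARD('n) * 2 powr (- real_of_int (N - 1))"
proof -
  have "dist x 0 = L2_set (\<lambda>i. dist (x$i) (0$i)) UNIV" by (simp add: dist_vec_def)
  also have "\<dots> \<le> (\<Sum>i\<in>UNIV. dist (x$i) (0$i))" by (rule L2_set_le_sum) simp
  also have "\<dots> \<le> (\<Sum>i\<in>(UNIV::'n set). 2 powr (- real_of_int (N - 1)))"
  proof (rule sum_mono)
    fix r :: 'n
    have "dist (x$r) 0 < 2 powr (- real_of_int (N - 1))"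
      using assms unfolding small_def using dist_fls_small by blast
    thus "dist (x$r) (0$r) \<le> 2 powr (- real_of_int (N - 1))" by simp
  qed
  finally show ?thesis by simp
qed

lemma arch2: "(c::real) > 0 \<Longrightarrow> \<exists>N::int. K * 2 powr (- real_of_int (N - 1)) < c" if "K \<ge> 0"
proof -
  assume c: "c > 0"
  have "c / (K+1) > 0" using c that by simp
  then obtain n where n: "(1/2::real)^n < c / (K+1)" using real_arch_pow_inv[of "c/(K+1)" "1/2"] by auto
  have "2 powr (- real_of_int (int n + 1 - 1)) = (1/2::real)^n"
    by (simp add: powr_minus powr_realpow power_one_over inverse_eq_divide)
  hence "K * 2 powr (- real_of_int (int n + 1 - 1)) \<le> (K+1) * (1/2)^n" using that
    by (simp add: mult_right_mono)
  also have "\<dots> < c" using n that by (simp add: field_simps)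
  finally show ?thesis by blast
qed

lemma addD:
  fixes A :: "('k::ab_group_add fls)^'n::finite \<Rightarrow> ('k fls)^'n"
  assumes "\<forall>x y. A (x + y) = A x + A y"
  shows "A 0 = 0" "A (x - y) = A x - A y" "A (sum f S) = (\<Sum>a\<in>S. A (f a))"
proof -
  have "A 0 = A 0 + A 0" using assms by (metis add.right_neutral)
  thus A0: "A 0 = 0" by simp
  have "A x = A (x - y) + A y" using assms by (metis diff_add_cancel)
  thus "A (x - y) = A x - A y" by simp
  show "A (sum f S) = (\<Sum>a\<in>S. A (f a))"
    by (induction S rule: infinite_finite_induct) (auto simp: A0 assms)
qed

lemma cont_iff:
  fixes A :: "('k::ab_group_add fls)^'n::finite \<Rightarrow> ('k fls)^'n"
  assumes add: "\<forall>x y. A (x + y) = A x + A y"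
  shows "continuous_on UNIV A \<longleftrightarrow> (\<forall>I. \<exists>J. \<forall>y. small J y \<longrightarrow> small I (A y))"
proof
  assume c: "continuous_on UNIV A"
  show "\<forall>I. \<exists>J. \<forall>y. small J y \<longrightarrow> small I (A y)"
  proof
    fix I
    have "(2::real) powr (- real_of_int (I - 1)) > 0" by simp
    then obtain d where d: "d > 0" "\<forall>x'. dist x' 0 < d \<longrightarrow> dist (A x') (A 0) < 2 powr (- real_of_int (I - 1))"
      using c unfolding continuous_on_iff by (metis UNIV_I)
    obtain J where J: "real CARD('n) * 2 powr (- real_of_int (J - 1)) < d"
      using arch2[of "real CARD('n)" d] d by auto
    have "small I (A y)" if "small J y" for y
    proof -
      have "dist y 0 < d" using dist_of_small[OF that] J by linarith
      hence "dist (A y) 0 < 2 powr (- real_of_int (I - 1))" using d addD(1)[OF add] by metis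
      thus ?thesis by (rule small_of_dist)
    qed
    thus "\<exists>J. \<forall>y. small J y \<longrightarrow> small I (A y)" by blast
  qed
next
  assume h: "\<forall>I. \<exists>J. \<forall>y. small J y \<longrightarrow> small I (A y)"
  show "continuous_on UNIV A"
    unfolding continuous_on_iff
  proof (intro ballI allI impI)
    fix x :: "('k fls)^'n" and e :: real assume "e > 0"
    obtain I where I: "real CARD('n) * 2 powr (- real_of_int (I - 1)) < e"
      using arch2[of "real CARD('n)" e] \<open>e > 0\<close> by auto
    obtain J where J: "\<forall>y. small J y \<longrightarrow> small I (A y)" using h by blast
    have "dist (A x') (A x) < e" if "dist x' x < 2 powr (- real_of_int (J - 1))" for x'
    proof -
      have "small J (x' - x)" using that by (intro small_of_dist) (simp add: dist_vec_sub[of x' x])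
      hence "small I (A x' - A x)" using J addD(2)[OF add] by metis
      hence "dist (A x' - A x) 0 < e" using dist_of_small I by (meson le_less_trans)
      thus ?thesis by (simp add: dist_vec_sub[of "A x'"])
    qed
    thus "\<exists>d>0. \<forall>x'\<in>UNIV. dist x' x < d \<longrightarrow> dist (A x') (A x) < e"
      by (intro exI[of _ "2 powr (- real_of_int (J - 1))"]) auto
  qed
qed

definition esc :: "'k::field \<Rightarrow> 'n \<Rightarrow> int \<Rightarrow> ('k fls)^'n" where
  "esc c s j = (\<chi> r'. if r' = s then monom_fls c j else 0)"

lemma monom_nth[simp]: "fls_nth (monom_fls a j) i = (if i = j then a else 0)"
  by (simp add: monom_fls_def)

lemma esc_nth[simp]: "fls_nth (esc c s j $ r) i = (if r = s \<and> i = j then c else 0)"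
  by (simp add: esc_def)

lemma block_esc: "block A i j $ r $ s = fls_nth (A (esc 1 s j) $ r) i"
  by (simp add: block_def esc_def)

lemma esc_add: "esc (a + b) s j = esc a s j + esc b s j"
  by (simp add: vec_eq_iff fls_eq_iff)

lemma esc_0: "esc 0 s j = 0"
  by (simp add: vec_eq_iff fls_eq_iff)

lemma lin_esc:
  fixes A :: "('k::{field,finite} fls)^'n::finite \<Rightarrow> ('k fls)^'n"
  assumes p: "prime p" "CARD('k) = p"
    and add: "\<forall>x y. A (x + y) = A x + A y"
  shows "fls_nth (A (esc c s j) $ r) i = c * block A i j $ r $ s"
proof -
  obtain n where n: "c = of_nat n" using all_of_nat[OF p] by blast
  have "fls_nth (A (esc (of_nat n) s j) $ r) i = of_nat n * block A i j $ r $ s"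
  proof (induction n)
    case 0 thus ?case by (simp add: esc_0 addD(1)[OF add])
  next
    case (Suc n)
    have "esc (of_nat (Suc n)) s j = esc (of_nat n) s j + esc 1 s j"
      by (simp add: esc_add[symmetric] add.commute)
    hence "A (esc (of_nat (Suc n)) s j) = A (esc (of_nat n) s j) + A (esc 1 s j)" using add by metis
    thus ?case using Suc by (simp add: block_esc distrib_right)
  qed
  thus ?thesis using n by simp
qed

lemma trunc_nth:
  "fls_nth ((\<Sum>j\<in>{m..<J}. \<Sum>s\<in>UNIV. esc (g s j) s j) $ r) i = (if m \<le> i \<and> i < J then g r i else 0)"
proof -
  have "fls_nth ((\<Sum>j\<in>{m..<J}. \<Sum>s\<in>UNIV. esc (g s j) s j) $ r) i
      = (\<Sum>j\<in>{m..<J}. \<Sum>s\<in>UNIV. (if r = s \<and> i = j then g s j else 0))"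
    by (simp add: fls_nth_sum)
  also have "\<dots> = (\<Sum>j\<in>{m..<J}. (if i = j then g r j else 0))"
    by (intro sum.cong refl) (auto simp: if_distrib sum.delta cong: if_cong)
  also have "\<dots> = (if m \<le> i \<and> i < J then g r i else 0)"
    by (simp add: sum.delta)
  finally show ?thesis .
qed

lemma trunc_small:
  fixes x :: "('k::field fls)^'n::finite"
  assumes "\<forall>s j. j < m \<longrightarrow> fls_nth (x$s) j = 0"
  shows "small J (x - (\<Sum>j\<in>{m..<J}. \<Sum>s\<in>UNIV. esc (fls_nth (x$s) j) s j))"
  unfolding small_def
proof (intro allI impI)
  fix r i assume "i < J"
  have "fls_nth ((x - (\<Sum>j\<in>{m..<J}. \<Sum>s\<in>UNIV. esc (fls_nth (x$s) j) s j)) $ r) i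
     = fls_nth (x$r) i - (if m \<le> i \<and> i < J then fls_nth (x$r) i else 0)"
    by (simp only: vector_minus_component fls_minus_nth trunc_nth)
  thus "fls_nth ((x - (\<Sum>j\<in>{m..<J}. \<Sum>s\<in>UNIV. esc (fls_nth (x$s) j) s j)) $ r) i = 0"
    using assms \<open>i < J\<close> by (cases "m \<le> i") auto
qed

lemma formF:
  fixes A :: "('k::{field,finite} fls)^'n::finite \<Rightarrow> ('k fls)^'n" and x :: "('k fls)^'n"
  assumes p: "prime p" "CARD('k) = p"
    and add: "\<forall>x y. A (x + y) = A x + A y"
    and low: "\<forall>s j. j < m \<longrightarrow> fls_nth (x$s) j = 0"
    and J: "\<forall>y. small J y \<longrightarrow> small (i+1) (A y)"
  shows "fls_nth (A x $ r) i = (\<Sum>j\<in>{m..<J}. \<Sum>s\<in>UNIV. fls_nth (x$s) j * block A i j $ r $ s)"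
proof -
  define T where "T = (\<Sum>j\<in>{m..<J}. \<Sum>s\<in>UNIV. esc (fls_nth (x$s) j) s j)"
  have "small J (x - T)" unfolding T_def by (rule trunc_small[OF low])
  hence "small (i+1) (A (x - T))" using J by blast
  hence z: "fls_nth (A (x - T) $ r) i = 0" unfolding small_def by simp
  have "x = T + (x - T)" by simp
  hence "A x = A T + A (x - T)" using add by metis
  hence 1: "fls_nth (A x $ r) i = fls_nth (A T $ r) i" using z by simp
  have 2: "A T = (\<Sum>j\<in>{m..<J}. \<Sum>s\<in>UNIV. A (esc (fls_nth (x$s) j) s j))"
    unfolding T_def by (simp only: addD(3)[OF add])
  have 3: "fls_nth ((\<Sum>j\<in>{m..<J}. \<Sum>s\<in>UNIV. A (esc (fls_nth (x$s) j) s j)) $ r) i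
     = (\<Sum>j\<in>{m..<J}. \<Sum>s\<in>UNIV. fls_nth (A (esc (fls_nth (x$s) j) s j) $ r) i)"
    by (simp only: sum_component fls_nth_sum)
  show ?thesis unfolding 1 2 3 lin_esc[OF p add] ..
qed

lemma contD:
  fixes A :: "('k::{field,finite} fls)^'n::finite \<Rightarrow> ('k fls)^'n"
  assumes "A \<in> cont_End"
  shows "\<forall>x y. A (x + y) = A x + A y" "\<exists>J. \<forall>y. small J y \<longrightarrow> small I (A y)"
  using assms cont_iff[of A] unfolding cont_End_def by auto

lemma small_esc: "J \<le> j \<Longrightarrow> small J (esc c s j)"
  unfolding small_def by simp

lemma block_J:
  fixes A :: "('k::{field,finite} fls)^'n::finite \<Rightarrow> ('k fls)^'n"
  assumes "\<forall>y. small J y \<longrightarrow> small I (A y)" "i < I" "J \<le> j"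
  shows "block A i j = 0"
proof -
  have "fls_nth (A (esc 1 s j) $ r) i = 0" for r s
    using assms small_esc[of J j 1 s] unfolding small_def by blast
  thus ?thesis by (simp add: vec_eq_iff block_esc)
qed

lemma block_Mdz:
  fixes A :: "('k::{field,finite} fls)^'n::finite \<Rightarrow> ('k fls)^'n"
  assumes "A \<in> cont_End"
  shows "block A \<in> Mdz"
  unfolding Mdz_def
proof (intro CollectI conjI allI)
  fix i
  obtain J where "\<forall>y. small J y \<longrightarrow> small (i+1) (A y)" using contD(2)[OF assms] by blast
  thus "\<exists>J. \<forall>j>J. block A i j = 0" using block_J[of J "i+1" A i] by (meson less_add_one less_imp_le)
next
  fix j
  define I where "I = Min (range (\<lambda>(r,s). fls_subdegree (A (esc 1 s j) $ r)))"
  have "\<forall>i<I. block A i j = 0"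
  proof (intro allI impI)
    fix i assume "i < I"
    have "fls_nth (A (esc 1 s j) $ r) i = 0" for r s
    proof -
      have "I \<le> fls_subdegree (A (esc 1 s j) $ r)" unfolding I_def
        by (rule Min_le) (auto intro: rev_image_eqI[of "(r,s)"])
      thus ?thesis using \<open>i < I\<close> by simp
    qed
    thus "block A i j = 0" by (simp add: vec_eq_iff block_esc)
  qed
  thus "\<exists>I. \<forall>i<I. block A i j = 0" by blast
next
  obtain J where "\<forall>y. small J y \<longrightarrow> small 0 (A y)" using contD(2)[OF assms] by blast
  thus "\<exists>I J. \<forall>i j. i < I \<and> j > J \<longrightarrow> block A i j = 0"
    using block_J[of J 0 A] by (meson less_imp_le)
qed

lemma small_mono: "J' \<le> J \<Longrightarrow> small J y \<Longrightarrow> small J' y"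
  unfolding small_def by auto

lemma low_exists:
  fixes x :: "('k::zero fls)^'n::finite"
  shows "\<exists>m. \<forall>s j. j < m \<longrightarrow> fls_nth (x$s) j = 0"
proof -
  define m where "m = Min (range (\<lambda>s. fls_subdegree (x$s)))"
  have "m \<le> fls_subdegree (x$s)" for s unfolding m_def by (rule Min_le) auto
  hence "\<forall>s j. j < m \<longrightarrow> fls_nth (x$s) j = 0" by (meson fls_eq0_below_subdegree less_le_trans)
  thus ?thesis by blast
qed

lemma block_inj:
  fixes A B :: "('k::{field,finite} fls)^'n::finite \<Rightarrow> ('k fls)^'n"
  assumes p: "prime p" "CARD('k) = p"
    and A: "A \<in> cont_End" and B: "B \<in> cont_End" and eq: "block A = block B"
  shows "A = B"
proof (rule ext)
  fix x :: "('k fls)^'n"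
  obtain m where m: "\<forall>s j. j < m \<longrightarrow> fls_nth (x$s) j = 0" using low_exists by blast
  show "A x = B x"
    unfolding vec_eq_iff fls_eq_iff
  proof (intro allI)
    fix r i
    obtain JA where JA: "\<forall>y. small JA y \<longrightarrow> small (i+1) (A y)" using contD(2)[OF A] by blast
    obtain JB where JB: "\<forall>y. small JB y \<longrightarrow> small (i+1) (B y)" using contD(2)[OF B] by blast
    let ?J = "max JA JB"
    have "\<forall>y. small ?J y \<longrightarrow> small (i+1) (A y)" using JA small_mono[of JA ?J] by auto
    moreover have "\<forall>y. small ?J y \<longrightarrow> small (i+1) (B y)" using JB small_mono[of JB ?J] by auto
    ultimately show "fls_nth (A x $ r) i = fls_nth (B x $ r) i"
      using formF[OF p contD(1)[OF A] m, of ?J i r] formF[OF p contD(1)[OF B] m, of ?J i r] eq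
      by simp
  qed
qed

lemma block_comp:
  fixes A B :: "('k::{field,finite} fls)^'n::finite \<Rightarrow> ('k fls)^'n"
  assumes p: "prime p" "CARD('k) = p"
    and A: "A \<in> cont_End" and B: "B \<in> cont_End"
  shows "block (A \<circ> B) = block_mult (block A) (block B)"
proof (intro ext)
  fix i j
  define m where "m = Min (range (\<lambda>(u,s'). fls_subdegree (B (esc 1 s' j) $ u)))"
  have mle: "m \<le> fls_subdegree (B (esc 1 s' j) $ u)" for u s' unfolding m_def
    by (rule Min_le) (auto intro: rev_image_eqI[of "(u,s')"])
  obtain J where J: "\<forall>y. small J y \<longrightarrow> small (i+1) (A y)" using contD(2)[OF A] by blast
  define S where "S = {k. block A i k \<noteq> 0 \<and> block B k j \<noteq> 0}"
  have SJ: "S \<subseteq> {m..<J}"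
  proof
    fix k assume "k \<in> S"
    hence a: "block A i k \<noteq> 0" and b: "block B k j \<noteq> 0" unfolding S_def by auto
    from a have "k < J" using block_J[OF J, of i k] by (meson less_add_one not_le)
    moreover from b obtain u s' where "block B k j $ u $ s' \<noteq> 0" by (metis vec_eq_iff zero_index)
    hence "fls_nth (B (esc 1 s' j) $ u) k \<noteq> 0" by (simp add: block_esc)
    hence "m \<le> k" using mle[of s' u] by (meson fls_eq0_below_subdegree less_le_trans not_le)
    ultimately show "k \<in> {m..<J}" by simp
  qed
  have "block_mult (block A) (block B) i j = (\<Sum>k\<in>S. block A i k ** block B k j)"
    unfolding block_mult_def S_def ..
  also have "\<dots> = (\<Sum>k\<in>{m..<J}. block A i k ** block B k j)"
    by (rule sum.mono_neutral_left) (use SJ in \<open>auto simp: S_def\<close>)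
  finally have bm: "block_mult (block A) (block B) i j = (\<Sum>k\<in>{m..<J}. block A i k ** block B k j)" .
  show "block (A \<circ> B) i j = block_mult (block A) (block B) i j"
    unfolding vec_eq_iff
  proof (intro allI)
    fix r s
    have low: "\<forall>u k. k < m \<longrightarrow> fls_nth (B (esc 1 s j) $ u) k = 0"
      using mle by (meson fls_eq0_below_subdegree less_le_trans)
    have "block (A \<circ> B) i j $ r $ s = fls_nth (A (B (esc 1 s j)) $ r) i"
      by (simp add: block_esc)
    also have "\<dots> = (\<Sum>k\<in>{m..<J}. \<Sum>u\<in>UNIV. fls_nth (B (esc 1 s j) $ u) k * block A i k $ r $ u)"
      by (rule formF[OF p contD(1)[OF A] low J])
    also have "\<dots> = (\<Sum>k\<in>{m..<J}. (block A i k ** block B k j) $ r $ s)"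
      by (simp add: matrix_matrix_mult_def block_esc mult.commute)
    also have "\<dots> = block_mult (block A) (block B) i j $ r $ s"
      unfolding bm by simp
    finally show "block (A \<circ> B) i j $ r $ s = block_mult (block A) (block B) i j $ r $ s" .
  qed
qed

definition Jc :: "(int \<Rightarrow> int \<Rightarrow> 'k::field^'n::finite^'n) \<Rightarrow> int \<Rightarrow> int" where
  "Jc X i = (SOME J. \<forall>j>J. X i j = 0)"

definition m0 :: "('k::zero fls)^'n::finite \<Rightarrow> int" where
  "m0 x = Min (range (\<lambda>s. fls_subdegree (x$s)))"

definition cf :: "(int \<Rightarrow> int \<Rightarrow> 'k::field^'n::finite^'n) \<Rightarrow> ('k fls)^'n \<Rightarrow> 'n \<Rightarrow> int \<Rightarrow> 'k" where
  "cf X x r i = (\<Sum>j\<in>{m0 x..Jc X i}. \<Sum>s\<in>UNIV. X i j $ r $ s * fls_nth (x$s) j)"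

definition Aof :: "(int \<Rightarrow> int \<Rightarrow> 'k::field^'n::finite^'n) \<Rightarrow> ('k fls)^'n \<Rightarrow> ('k fls)^'n" where
  "Aof X x = (\<chi> r. Abs_fls (cf X x r))"

lemma Jc_prop: "X \<in> Mdz \<Longrightarrow> j > Jc X i \<Longrightarrow> X i j = 0"
  unfolding Jc_def Mdz_def by (metis (mono_tags, lifting) mem_Collect_eq someI_ex)

lemma m0_low:
  fixes x :: "('k::zero fls)^'n::finite"
  shows "j < m0 x \<Longrightarrow> fls_nth (x$s) j = 0"
proof -
  assume "j < m0 x"
  have "m0 x \<le> fls_subdegree (x$s)" unfolding m0_def by (rule Min_le) auto
  thus ?thesis using \<open>j < m0 x\<close> by simp
qed

lemma cf_eq:
  fixes X :: "int \<Rightarrow> int \<Rightarrow> 'k::field^'n::finite^'n" and x :: "('k fls)^'n"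
  assumes X: "X \<in> Mdz" and low: "\<forall>s j. j < m \<longrightarrow> fls_nth (x$s) j = 0" and J': "Jc X i \<le> J'"
  shows "cf X x r i = (\<Sum>j\<in>{m..J'}. \<Sum>s\<in>UNIV. X i j $ r $ s * fls_nth (x$s) j)"
proof -
  define g where "g j = (\<Sum>s\<in>UNIV. X i j $ r $ s * fls_nth (x$s) j)" for j
  have g1: "g j = 0" if "j < m0 x \<or> j < m \<or> j > Jc X i" for j
    using that m0_low[of j x] low Jc_prop[OF X, of i j] unfolding g_def by auto
  define U where "U = {min m (m0 x)..max J' (Jc X i)}"
  have "(\<Sum>j\<in>{m0 x..Jc X i}. g j) = (\<Sum>j\<in>U. g j)"
    by (rule sum.mono_neutral_left) (auto simp: U_def intro!: g1)
  moreover have "(\<Sum>j\<in>{m..J'}. g j) = (\<Sum>j\<in>U. g j)"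
    using J' by (intro sum.mono_neutral_left) (auto simp: U_def intro!: g1)
  ultimately show ?thesis unfolding cf_def g_def by simp
qed

lemma finite_lower:
  fixes P :: "int \<Rightarrow> 'a \<Rightarrow> bool"
  assumes "finite S" "\<forall>j\<in>S. \<exists>I. \<forall>i<I. P i j"
  shows "\<exists>L. \<forall>j\<in>S. \<forall>i<L. P i j"
  using assms
proof (induction S rule: finite_induct)
  case empty thus ?case by simp
next
  case (insert a S)
  then obtain L where L: "\<forall>j\<in>S. \<forall>i<L. P i j" by auto
  obtain I where I: "\<forall>i<I. P i a" using insert by auto
  have "\<forall>j\<in>insert a S. \<forall>i<min L I. P i j" using L I by auto
  thus ?case by blast
qed

lemma cf_lower:
  fixes X :: "int \<Rightarrow> int \<Rightarrow> 'k::field^'n::finite^'n" and x :: "('k fls)^'n"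
  assumes X: "X \<in> Mdz"
  shows "\<exists>L. \<forall>i<L. cf X x r i = 0"
proof -
  obtain I3 J3 where M3: "\<forall>i j. i < I3 \<and> j > J3 \<longrightarrow> X i j = 0" using X unfolding Mdz_def by blast
  have M2: "\<forall>j. \<exists>I. \<forall>i<I. X i j = 0" using X unfolding Mdz_def by blast
  obtain L0 where L0: "\<forall>j\<in>{m0 x..J3}. \<forall>i<L0. X i j = 0"
    using finite_lower[of "{m0 x..J3}" "\<lambda>i j. X i j = 0"] M2 by auto
  have "cf X x r i = 0" if "i < min I3 L0" for i
  proof -
    have "X i j = 0" if "j \<in> {m0 x..Jc X i}" for j
    proof (cases "j \<le> J3")
      case True thus ?thesis using L0 \<open>i < min I3 L0\<close> that by auto
    next
      case False thus ?thesis using M3 \<open>i < min I3 L0\<close> by auto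
    qed
    thus ?thesis unfolding cf_def by simp
  qed
  thus ?thesis by blast
qed

lemma Aof_nth:
  fixes X :: "int \<Rightarrow> int \<Rightarrow> 'k::field^'n::finite^'n" and x :: "('k fls)^'n"
  assumes X: "X \<in> Mdz"
  shows "fls_nth (Aof X x $ r) i = cf X x r i"
proof -
  obtain L where "\<forall>i<L. cf X x r i = 0" using cf_lower[OF X] by blast
  thus ?thesis unfolding Aof_def by (simp add: nth_Abs_fls_lower_bound)
qed

lemma Aof_add:
  fixes X :: "int \<Rightarrow> int \<Rightarrow> 'k::field^'n::finite^'n" and x y :: "('k fls)^'n"
  assumes X: "X \<in> Mdz"
  shows "Aof X (x + y) = Aof X x + Aof X y"
  unfolding vec_eq_iff fls_eq_iff
proof (intro allI)
  fix r i
  define m where "m = min (m0 (x+y)) (min (m0 x) (m0 y))"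
  have lx: "\<forall>s j. j < m \<longrightarrow> fls_nth (x$s) j = 0" using m0_low unfolding m_def by fastforce
  have ly: "\<forall>s j. j < m \<longrightarrow> fls_nth (y$s) j = 0" using m0_low unfolding m_def by fastforce
  have lxy: "\<forall>s j. j < m \<longrightarrow> fls_nth ((x+y)$s) j = 0" using m0_low unfolding m_def by fastforce
  show "fls_nth (Aof X (x + y) $ r) i = fls_nth ((Aof X x + Aof X y) $ r) i"
    unfolding vector_add_component fls_plus_nth Aof_nth[OF X]
      cf_eq[OF X lx order.refl] cf_eq[OF X ly order.refl] cf_eq[OF X lxy order.refl]
    by (simp add: sum.distrib[symmetric] distrib_left)
qed

lemma Aof_small:
  fixes X :: "int \<Rightarrow> int \<Rightarrow> 'k::field^'n::finite^'n"
  assumes X: "X \<in> Mdz"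
  shows "\<exists>J. \<forall>y. small J y \<longrightarrow> small I (Aof X y)"
proof -
  obtain I3 J3 where M3: "\<forall>i j. i < I3 \<and> j > J3 \<longrightarrow> X i j = 0" using X unfolding Mdz_def by blast
  define J where "J = max (J3 + 1) (Max (insert 0 (Jc X ` {I3..<I})) + 1)"
  have JJ: "Jc X i < J" if "i \<in> {I3..<I}" for i
  proof -
    have "Jc X i \<le> Max (insert 0 (Jc X ` {I3..<I}))" by (rule Max_ge) (use that in auto)
    thus ?thesis unfolding J_def by linarith
  qed
  have "small I (Aof X y)" if y: "small J y" for y
    unfolding small_def
  proof (intro allI impI)
    fix r i assume "i < I"
    have "X i j $ r $ s * fls_nth (y$s) j = 0" if "j \<in> {m0 y..Jc X i}" for j s
    proof (cases "j < J")
      case True thus ?thesis using y unfolding small_def by simp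
    next
      case False
      have "\<not> (I3 \<le> i)" using JJ[of i] \<open>i < I\<close> that False by auto
      moreover have "j > J3" using False unfolding J_def by simp
      ultimately show ?thesis using M3 by simp
    qed
    hence "(\<Sum>j\<in>{m0 y..Jc X i}. \<Sum>s\<in>UNIV. X i j $ r $ s * fls_nth (y$s) j) = 0"
      by (intro sum.neutral ballI) blast
    thus "fls_nth (Aof X y $ r) i = 0" unfolding Aof_nth[OF X] cf_def .
  qed
  thus ?thesis by blast
qed

lemma Aof_cont:
  fixes X :: "int \<Rightarrow> int \<Rightarrow> 'k::{field,finite}^'n::finite^'n"
  assumes X: "X \<in> Mdz"
  shows "Aof X \<in> cont_End"
  unfolding cont_End_def using Aof_add[OF X] cont_iff[of "Aof X"] Aof_small[OF X] by auto

lemma block_Aof: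
  fixes X :: "int \<Rightarrow> int \<Rightarrow> 'k::{field,finite}^'n::finite^'n"
  assumes X: "X \<in> Mdz"
  shows "block (Aof X) = X"
proof (intro ext)
  fix i j
  show "block (Aof X) i j = X i j"
    unfolding vec_eq_iff
  proof (intro allI)
    fix r s :: 'n
    have low: "\<forall>s' j'. j' < j \<longrightarrow> fls_nth (esc 1 s j $ s') j' = 0" by simp
    have "block (Aof X) i j $ r $ s = cf X (esc 1 s j) r i"
      by (simp add: block_esc Aof_nth[OF X])
    also have "\<dots> = (\<Sum>j'\<in>{j..max j (Jc X i)}. \<Sum>s'\<in>UNIV. X i j' $ r $ s' * fls_nth (esc 1 s j $ s') j')"
      by (rule cf_eq[OF X low]) simp
    also have "\<dots> = (\<Sum>j'\<in>{j..max j (Jc X i)}. if j' = j then X i j $ r $ s else 0)"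
    proof (intro sum.cong refl)
      fix j' show "(\<Sum>s'\<in>UNIV. X i j' $ r $ s' * fls_nth (esc 1 s j $ s') j') = (if j' = j then X i j $ r $ s else 0)"
        by (cases "j' = j") (simp_all add: if_distrib sum.delta cong: if_cong)
    qed
    also have "\<dots> = X i j $ r $ s" by (simp add: sum.delta)
    finally show "block (Aof X) i j $ r $ s = X i j $ r $ s" .
  qed
qed

theorem mainTheorem8:
  fixes p :: nat
  assumes "prime p" and "CARD('k::{field,finite}) = p"
  shows "bij_betw (block :: ('k fls^'n::finite \<Rightarrow> 'k fls^'n) \<Rightarrow> _) cont_End Mdz
       \<and> (\<forall>A\<in>(cont_End :: ('k fls^'n \<Rightarrow> 'k fls^'n) set). \<forall>B\<in>cont_End.
            block (\<lambda>x. A x + B x) = (\<lambda>i j. block A i j + block B i j)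
          \<and> block (A \<circ> B) = block_mult (block A) (block B))
       \<and> block (id :: 'k fls^'n \<Rightarrow> 'k fls^'n) = block_one"
proof (intro conjI ballI)
  show "bij_betw (block :: ('k fls^'n::finite \<Rightarrow> 'k fls^'n) \<Rightarrow> _) cont_End Mdz"
    unfolding bij_betw_def
  proof
    show "inj_on (block :: ('k fls^'n::finite \<Rightarrow> 'k fls^'n) \<Rightarrow> _) cont_End"
      using block_inj[OF assms] by (meson inj_onI)
    show "(block :: ('k fls^'n::finite \<Rightarrow> 'k fls^'n) \<Rightarrow> _) ` cont_End = Mdz"
    proof
      show "(block :: ('k fls^'n::finite \<Rightarrow> 'k fls^'n) \<Rightarrow> _) ` cont_End \<subseteq> Mdz"
        using block_Mdz by blast
      show "Mdz \<subseteq> (block :: ('k fls^'n::finite \<Rightarrow> 'k fls^'n) \<Rightarrow> _) ` cont_End"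
      proof
        fix X :: "int \<Rightarrow> int \<Rightarrow> 'k^'n^'n" assume X: "X \<in> Mdz"
        show "X \<in> (block :: ('k fls^'n::finite \<Rightarrow> 'k fls^'n) \<Rightarrow> _) ` cont_End"
          using Aof_cont[OF X] block_Aof[OF X] by (metis image_eqI)
      qed
    qed
  qed
next
  fix A B :: "'k fls^'n \<Rightarrow> 'k fls^'n" assume A: "A \<in> cont_End" and B: "B \<in> cont_End"
  show "block (\<lambda>x. A x + B x) = (\<lambda>i j. block A i j + block B i j)"
    by (simp add: block_def vec_eq_iff fun_eq_iff)
  show "block (A \<circ> B) = block_mult (block A) (block B)"
    by (rule block_comp[OF assms A B])
next
  show "block (id :: 'k fls^'n \<Rightarrow> 'k fls^'n) = block_one"
    by (simp add: block_def block_one_def vec_eq_iff fun_eq_iff mat_def)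
qed

end
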